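(* Each of the graphs $K_4, H_1, H_2, H_3, H_4, H_5, H_6, H_7, H_8, H_9$ is $4$-$\chi_\rho$-vertex-critical.
   Context: All graphs are finite and simple; $d(u,v)$ is the shortest-path distance. A $k$-packing coloring of $G$ is a map $c:V(G)\to\{1,\dots,k\}$ such that whenever $u\neq v$ and $c(u)=c(v)=i$, we have $d(u,v)>i$. $\chi_\rho(G)$ is the least $k$ such that $G$ has a $k$-packing coloring. $G$ is $4$-$\chi_\rho$-vertex-critical if $\chi_\rho(G)=4$ and $\chi_\rho(G-x)<4$ for every vertex $x$. $H_1$: vertices $a,b,c,d,e$; edges $ab,ad,ae,bd,de,bc$. $H_2$: vertices $a,b,c,d,e$; edges $ab,be,ea,bc,cd,db$. $H_3$: vertices $a,\dots,f$; edges $ab,bc,ca,ad,be,cf$. $H_4$: vertices $a,\dots,g$; edges $ab,bc,cd,de,ef,cg,dg$. $H_5$: vertices $a,\dots,f$; edges $ab,bc,cd,da,be,cf$. $H_6$: vertices $a,\dots,f$; edges $ab,be,ed,da,ac,ce,bf$. $H_7$: vertices $a,\dots,j$; edges $ab,bc,cd,de,ef,eg,gh,hi,ij,jb$. $H_8$: $H_7$ together with the additional edge $ai$. $H_9$: vertices $a,\dots,h$; edges $ab,bc,cd,de,bf,cg,dh$. *)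

theory Defs
  imports Main "HOL-Library.Extended_Nat"
begin

type_synonym 'a graph = "'a set \<times> 'a set set"

definition verts :: "'a graph \<Rightarrow> 'a set" where "verts G = fst G"
definition edges :: "'a graph \<Rightarrow> 'a set set" where "edges G = snd G"

definition simple_graph :: "'a graph \<Rightarrow> bool" where
  "simple_graph G \<longleftrightarrow> finite (verts G) \<and>
     (\<forall>e\<in>edges G. e \<subseteq> verts G \<and> card e = 2)"

definition adj :: "'a graph \<Rightarrow> 'a \<Rightarrow> 'a \<Rightarrow> bool" where
  "adj G u v \<longleftrightarrow> {u, v} \<in> edges G"

definition walk :: "'a graph \<Rightarrow> 'a list \<Rightarrow> bool" where
  "walk G xs \<longleftrightarrow> xs \<noteq> [] \<and> set xs \<subseteq> verts G \<and>
     (\<forall>i. Suc i < length xs \<longrightarrow> adj G (xs ! i) (xs ! Suc i))"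

(* shortest-path distance; infinite if no path *)
definition dist :: "'a graph \<Rightarrow> 'a \<Rightarrow> 'a \<Rightarrow> enat" where
  "dist G u v = (INF xs \<in> {xs. walk G xs \<and> hd xs = u \<and> last xs = v}. enat (length xs - 1))"

definition packing_coloring :: "'a graph \<Rightarrow> nat \<Rightarrow> ('a \<Rightarrow> nat) \<Rightarrow> bool" where
  "packing_coloring G k c \<longleftrightarrow>
     (\<forall>v\<in>verts G. c v \<in> {1..k}) \<and>
     (\<forall>u\<in>verts G. \<forall>v\<in>verts G. u \<noteq> v \<and> c u = c v \<longrightarrow> dist G u v > enat (c u))"

definition packing_chromatic :: "'a graph \<Rightarrow> nat" where
  "packing_chromatic G = (LEAST k. \<exists>c. packing_coloring G k c)"

definition delete_vertex :: "'a graph \<Rightarrow> 'a \<Rightarrow> 'a graph" where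
  "delete_vertex G x = (verts G - {x}, {e \<in> edges G. x \<notin> e})"

definition vertex_critical4 :: "'a graph \<Rightarrow> bool" where
  "vertex_critical4 G \<longleftrightarrow> packing_chromatic G = 4 \<and>
     (\<forall>x\<in>verts G. packing_chromatic (delete_vertex G x) < 4)"

definition mk_graph :: "nat \<Rightarrow> (nat \<times> nat) list \<Rightarrow> nat graph" where
  "mk_graph n es = ({0..<n}, (\<lambda>(u, v). {u, v}) ` set es)"

(* vertex naming: a=0, b=1, c=2, d=3, e=4, f=5, g=6, h=7, i=8, j=9 *)
definition K4 :: "nat graph" where
  "K4 = mk_graph 4 [(0,1),(0,2),(0,3),(1,2),(1,3),(2,3)]"
definition H1 :: "nat graph" where
  "H1 = mk_graph 5 [(0,1),(0,3),(0,4),(1,3),(3,4),(1,2)]"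
definition H2 :: "nat graph" where
  "H2 = mk_graph 5 [(0,1),(1,4),(4,0),(1,2),(2,3),(3,1)]"
definition H3 :: "nat graph" where
  "H3 = mk_graph 6 [(0,1),(1,2),(2,0),(0,3),(1,4),(2,5)]"
definition H4 :: "nat graph" where
  "H4 = mk_graph 7 [(0,1),(1,2),(2,3),(3,4),(4,5),(2,6),(3,6)]"
definition H5 :: "nat graph" where
  "H5 = mk_graph 6 [(0,1),(1,2),(2,3),(3,0),(1,4),(2,5)]"
definition H6 :: "nat graph" where
  "H6 = mk_graph 6 [(0,1),(1,4),(4,3),(3,0),(0,2),(2,4),(1,5)]"
definition H7 :: "nat graph" where
  "H7 = mk_graph 10 [(0,1),(1,2),(2,3),(3,4),(4,5),(4,6),(6,7),(7,8),(8,9),(9,1)]"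
definition H8 :: "nat graph" where
  "H8 = mk_graph 10 [(0,1),(1,2),(2,3),(3,4),(4,5),(4,6),(6,7),(7,8),(8,9),(9,1),(0,8)]"
definition H9 :: "nat graph" where
  "H9 = mk_graph 8 [(0,1),(1,2),(2,3),(3,4),(1,5),(2,6),(3,7)]"

end

theory Submission
  imports Defs
begin

definition gr :: "nat list \<Rightarrow> (nat \<times> nat) list \<Rightarrow> nat graph" where
  "gr vs es = (set vs, (\<lambda>(u, v). {u, v}) ` set es)"

definition nb :: "(nat \<times> nat) list \<Rightarrow> nat \<Rightarrow> nat list" where
  "nb es x = map snd (filter (\<lambda>p. fst p = x) es) @ map fst (filter (\<lambda>p. snd p = x) es)"

definition ext :: "(nat \<times> nat) list \<Rightarrow> nat list \<Rightarrow> nat list" where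
  "ext es b = remdups (b @ concat (map (nb es) b))"

lemma set_ext[simp]: "set (ext es b) = set b \<union> set (concat (map (nb es) b))"
  by (simp add: ext_def)

fun ball :: "(nat \<times> nat) list \<Rightarrow> nat \<Rightarrow> nat \<Rightarrow> nat list" where
  "ball es 0 u = [u]"
| "ball es (Suc k) u = ext es (ball es k u)"

lemma ball_one: "ball es 1 u = ext es [u]"
  by simp

lemma ball_num: "ball es (numeral n) u = ext es (ball es (pred_numeral n) u)"
  by (simp add: numeral_eq_Suc)

definition wfe :: "nat list \<Rightarrow> (nat \<times> nat) list \<Rightarrow> bool" where
  "wfe vs es \<longleftrightarrow> (\<forall>p\<in>set es. fst p \<in> set vs \<and> snd p \<in> set vs)"

lemma verts_gr[simp]: "verts (gr vs es) = set vs"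
  by (simp add: verts_def gr_def)

lemma adj_gr: "adj (gr vs es) x y \<longleftrightarrow> y \<in> set (nb es x)"
  unfolding adj_def gr_def edges_def nb_def
  by (force simp: doubleton_eq_iff image_iff)

lemma nb_in: "wfe vs es \<Longrightarrow> y \<in> set (nb es x) \<Longrightarrow> y \<in> set vs"
  unfolding wfe_def nb_def by auto

lemma walk_snoc_iff:
  assumes "ys \<noteq> []"
  shows "walk G (ys @ [v]) \<longleftrightarrow> walk G ys \<and> v \<in> verts G \<and> adj G (last ys) v"
proof
  assume w: "walk G (ys @ [v])"
  have "\<forall>i. Suc i < length ys \<longrightarrow> adj G (ys ! i) (ys ! Suc i)"
  proof (intro allI impI)
    fix i assume "Suc i < length ys"
    with w show "adj G (ys ! i) (ys ! Suc i)"
      unfolding walk_def by (metis length_append_singleton less_SucI nth_append Suc_lessD)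
  qed
  moreover have "adj G (last ys) v"
  proof -
    from assms obtain m where m: "length ys = Suc m" by (cases ys) auto
    from w have "adj G ((ys @ [v]) ! m) ((ys @ [v]) ! Suc m)"
      unfolding walk_def using m by auto
    thus ?thesis using m assms by (simp add: nth_append last_conv_nth)
  qed
  ultimately show "walk G ys \<and> v \<in> verts G \<and> adj G (last ys) v"
    using w assms unfolding walk_def by auto
next
  assume h: "walk G ys \<and> v \<in> verts G \<and> adj G (last ys) v"
  show "walk G (ys @ [v])"
    unfolding walk_def
  proof (intro conjI allI impI)
    show "ys @ [v] \<noteq> []" by simp
    show "set (ys @ [v]) \<subseteq> verts G" using h unfolding walk_def by auto
    fix i assume i: "Suc i < length (ys @ [v])"
    show "adj G ((ys @ [v]) ! i) ((ys @ [v]) ! Suc i)"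
    proof (cases "Suc i < length ys")
      case True
      then show ?thesis using h unfolding walk_def by (simp add: nth_append)
    next
      case False
      then have "i = length ys - 1" using i by simp
      then show ?thesis using h assms False by (simp add: nth_append last_conv_nth)
    qed
  qed
qed

lemma reach:
  assumes wf: "wfe vs es" and u: "u \<in> set vs"
  shows "(\<exists>xs. walk (gr vs es) xs \<and> hd xs = u \<and> last xs = v \<and> length xs - 1 \<le> k)
          \<longleftrightarrow> v \<in> set (ball es k u)"
proof (induction k arbitrary: v)
  case 0
  show ?case
  proof
    assume "\<exists>xs. walk (gr vs es) xs \<and> hd xs = u \<and> last xs = v \<and> length xs - 1 \<le> 0"
    then obtain xs where "walk (gr vs es) xs" "hd xs = u" "last xs = v" "length xs - 1 \<le> 0" by blast
    then show "v \<in> set (ball es 0 u)" unfolding walk_def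
      by (cases xs) auto
  next
    assume "v \<in> set (ball es 0 u)"
    then have "v = u" by simp
    then have "walk (gr vs es) [u] \<and> hd [u] = u \<and> last [u] = v \<and> length [u] - 1 \<le> 0"
      using u unfolding walk_def by simp
    then show "\<exists>xs. walk (gr vs es) xs \<and> hd xs = u \<and> last xs = v \<and> length xs - 1 \<le> 0" by blast
  qed
next
  case (Suc k)
  show ?case
  proof
    assume "\<exists>xs. walk (gr vs es) xs \<and> hd xs = u \<and> last xs = v \<and> length xs - 1 \<le> Suc k"
    then obtain xs where xs: "walk (gr vs es) xs" "hd xs = u" "last xs = v" "length xs - 1 \<le> Suc k" by blast
    show "v \<in> set (ball es (Suc k) u)"
    proof (cases "length xs - 1 \<le> k")
      case True
      then have "v \<in> set (ball es k u)" using Suc.IH xs by blast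
      then show ?thesis by simp
    next
      case False
      then have len: "length xs = k + 2" using xs(4) by simp
      then obtain ys v' where ys: "xs = ys @ [v']" by (metis rev_exhaust list.size(3) add_2_eq_Suc' nat.distinct(1))
      have yne: "ys \<noteq> []" using len ys by auto
      have v': "v' = v" using xs(3) ys by simp
      have w: "walk (gr vs es) ys" "adj (gr vs es) (last ys) v"
        using walk_snoc_iff[OF yne] xs(1) ys v' by auto
      have "hd ys = u" using xs(2) ys yne by simp
      moreover have "length ys - 1 \<le> k" using len ys by simp
      ultimately have "last ys \<in> set (ball es k u)" using Suc.IH w(1) by blast
      moreover have "v \<in> set (nb es (last ys))" using w(2) adj_gr by metis
      ultimately show ?thesis by auto
    qed
  next
    assume "v \<in> set (ball es (Suc k) u)"
    then consider "v \<in> set (ball es k u)" | w where "w \<in> set (ball es k u)" "v \<in> set (nb es w)"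
      by auto
    then show "\<exists>xs. walk (gr vs es) xs \<and> hd xs = u \<and> last xs = v \<and> length xs - 1 \<le> Suc k"
    proof cases
      case 1
      then show ?thesis using Suc.IH by (meson le_SucI)
    next
      case 2
      then obtain ys where ys: "walk (gr vs es) ys" "hd ys = u" "last ys = w" "length ys - 1 \<le> k"
        using Suc.IH by blast
      have yne: "ys \<noteq> []" using ys(1) unfolding walk_def by simp
      have "walk (gr vs es) (ys @ [v])"
        using walk_snoc_iff[OF yne] ys 2 nb_in[OF wf] adj_gr by auto
      moreover have "hd (ys @ [v]) = u" using ys yne by simp
      moreover have "length (ys @ [v]) - 1 \<le> Suc k" using ys yne by simp
      ultimately show ?thesis by (metis last_snoc)
    qed
  qed
qed

lemma dist_le:
  "dist G u v \<le> enat k \<longleftrightarrow> (\<exists>xs. walk G xs \<and> hd xs = u \<and> last xs = v \<and> length xs - 1 \<le> k)"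
proof
  assume h: "dist G u v \<le> enat k"
  let ?W = "{xs. walk G xs \<and> hd xs = u \<and> last xs = v}"
  let ?A = "(\<lambda>xs. enat (length xs - 1)) ` ?W"
  have "?A \<noteq> {}"
  proof
    assume "?A = {}"
    then have "dist G u v = \<infinity>" unfolding dist_def by (simp add: Inf_enat_def)
    with h show False by simp
  qed
  then have "dist G u v \<in> ?A" unfolding dist_def Inf_enat_def
    by (auto intro: LeastI)
  then obtain xs where "xs \<in> ?W" "dist G u v = enat (length xs - 1)" by blast
  with h show "\<exists>xs. walk G xs \<and> hd xs = u \<and> last xs = v \<and> length xs - 1 \<le> k" by auto
next
  assume "\<exists>xs. walk G xs \<and> hd xs = u \<and> last xs = v \<and> length xs - 1 \<le> k"
  then obtain xs where xs: "walk G xs" "hd xs = u" "last xs = v" "length xs - 1 \<le> k" by blast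
  then have "dist G u v \<le> enat (length xs - 1)" unfolding dist_def
    by (intro INF_lower) auto
  also have "\<dots> \<le> enat k" using xs(4) by simp
  finally show "dist G u v \<le> enat k" .
qed

lemma dist_gt:
  assumes "wfe vs es" "u \<in> set vs"
  shows "enat i < dist (gr vs es) u v \<longleftrightarrow> v \<notin> set (ball es i u)"
  using dist_le[of "gr vs es" u v i] reach[OF assms, of v i] by (simp add: not_le[symmetric])

type_synonym clf = "nat \<Rightarrow> nat \<Rightarrow> nat \<Rightarrow> bool"

definition bcl :: "(nat \<times> nat) list \<Rightarrow> clf" where
  "bcl es i u v \<longleftrightarrow> v \<in> set (ball es i u)"

definition okc :: "clf \<Rightarrow> nat set \<Rightarrow> (nat \<Rightarrow> nat) \<Rightarrow> bool" where
  "okc es S c \<longleftrightarrow> (\<forall>u\<in>S. \<forall>v\<in>S. u \<noteq> v \<and> c u = c v \<longrightarrow> \<not> es (c u) u v)"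

definition rng :: "nat set \<Rightarrow> nat set \<Rightarrow> (nat \<Rightarrow> nat) \<Rightarrow> bool" where
  "rng K S c \<longleftrightarrow> (\<forall>v\<in>S. c v \<in> K)"

lemma pc_gr:
  assumes "wfe vs es"
  shows "packing_coloring (gr vs es) k c \<longleftrightarrow> rng {1..k} (set vs) c \<and> okc (bcl es) (set vs) c"
  unfolding packing_coloring_def rng_def okc_def bcl_def using dist_gt[OF assms] by auto

definition okv :: "clf \<Rightarrow> nat list \<Rightarrow> (nat \<Rightarrow> nat) \<Rightarrow> nat \<Rightarrow> nat \<Rightarrow> bool" where
  "okv es dn c v i = list_all (\<lambda>u. if c u = i then \<not> es i u v \<and> \<not> es i v u else True) dn"

fun bt :: "clf \<Rightarrow> nat list \<Rightarrow> nat list \<Rightarrow> nat list \<Rightarrow> (nat \<Rightarrow> nat) \<Rightarrow> nat list \<Rightarrow> bool" where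
  "bt es ks [] dn c cs = True"
| "bt es ks (v # td) dn c [] = False"
| "bt es ks (v # td) dn c (i # is) =
     (if okv es dn c v i then (if bt es ks td (v # dn) (c(v := i)) ks then True else bt es ks (v # td) dn c is)
      else bt es ks (v # td) dn c is)"

lemma bt_cons: "bt es ks (v # td) dn c cs \<longleftrightarrow> (\<exists>i\<in>set cs. okv es dn c v i \<and> bt es ks td (v # dn) (c(v := i)) ks)"
proof (induction cs)
  case Nil
  show ?case by simp
next
  case (Cons i js)
  have "bt es ks (v # td) dn c (i # js) \<longleftrightarrow>
     (okv es dn c v i \<and> bt es ks td (v # dn) (c(v := i)) ks) \<or> bt es ks (v # td) dn c js"
    by (simp only: bt.simps split: if_split) blast
  then show ?case using Cons.IH by (simp only: list.set(2) Set.bex_simps(5))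
qed

lemma bt_iff:
  "distinct (td @ dn) \<Longrightarrow> okc es (set dn) c \<Longrightarrow> rng (set ks) (set dn) c \<Longrightarrow>
   bt es ks td dn c ks \<longleftrightarrow> (\<exists>c'. (\<forall>u\<in>set dn. c' u = c u) \<and> rng (set ks) (set td \<union> set dn) c' \<and> okc es (set td \<union> set dn) c')"
proof (induction td arbitrary: dn c)
  case Nil
  then show ?case by auto
next
  case (Cons v td)
  show ?case
  proof
    assume "bt es ks (v # td) dn c ks"
    then obtain i where i: "i \<in> set ks"
      and cond: "\<forall>u\<in>set dn. c u = i \<longrightarrow> \<not> es i u v \<and> \<not> es i v u"
      and rec: "bt es ks td (v # dn) (c(v := i)) ks"
      unfolding bt_cons okv_def list_all_iff by (auto split: if_splits)
    have vn: "v \<notin> set dn" using Cons.prems(1) by auto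
    have ok: "okc es (set (v # dn)) (c(v := i))"
      using Cons.prems(2) cond vn unfolding okc_def by auto
    have rg: "rng (set ks) (set (v # dn)) (c(v := i))"
      using Cons.prems(3) i vn unfolding rng_def by auto
    have "distinct (td @ v # dn)" using Cons.prems(1) by auto
    from Cons.IH[OF this ok rg] rec obtain c' where
      "\<forall>u\<in>set (v # dn). c' u = (c(v := i)) u" "rng (set ks) (set td \<union> set (v # dn)) c'" "okc es (set td \<union> set (v # dn)) c'"
      by blast
    then show "\<exists>c'. (\<forall>u\<in>set dn. c' u = c u) \<and> rng (set ks) (set (v # td) \<union> set dn) c' \<and> okc es (set (v # td) \<union> set dn) c'"
      using vn by (intro exI[of _ c']) auto
  next
    assume "\<exists>c'. (\<forall>u\<in>set dn. c' u = c u) \<and> rng (set ks) (set (v # td) \<union> set dn) c' \<and> okc es (set (v # td) \<union> set dn) c'"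
    then obtain c' where ag: "\<forall>u\<in>set dn. c' u = c u" and rg: "rng (set ks) (set (v # td) \<union> set dn) c'"
      and ok: "okc es (set (v # td) \<union> set dn) c'" by blast
    have vn: "v \<notin> set dn" using Cons.prems(1) by auto
    define i where "i = c' v"
    have i: "i \<in> set ks" using rg unfolding rng_def i_def by auto
    have cond: "\<forall>u\<in>set dn. c u = i \<longrightarrow> \<not> es i u v \<and> \<not> es i v u"
    proof (intro ballI impI)
      fix u assume u: "u \<in> set dn" "c u = i"
      then have "u \<noteq> v" "c' u = c' v" using vn ag i_def by auto
      then show "\<not> es i u v \<and> \<not> es i v u"
        using ok u unfolding okc_def i_def by (metis Un_iff list.set_intros(1))
    qed
    have ag2: "\<forall>u\<in>set (v # dn). c' u = (c(v := i)) u" using ag vn i_def by auto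
    have ok2: "okc es (set (v # dn)) (c(v := i))"
    proof -
      have "okc es (set (v # dn)) c'" using ok unfolding okc_def by auto
      then show ?thesis using ag2 unfolding okc_def by (metis (no_types, lifting))
    qed
    have rg2: "rng (set ks) (set (v # dn)) (c(v := i))"
      using Cons.prems(3) i vn unfolding rng_def by auto
    have "distinct (td @ v # dn)" using Cons.prems(1) by auto
    from Cons.IH[OF this ok2 rg2] ag2 rg ok have "bt es ks td (v # dn) (c(v := i)) ks"
      by (metis Un_insert_left Un_insert_right list.set(2))
    then show "bt es ks (v # td) dn c ks"
      unfolding bt_cons okv_def list_all_iff
      using i cond by (intro bexI[of _ i]) auto
  qed
qed

lemma okc_cong:
  assumes "\<forall>i\<in>K. \<forall>u\<in>S. \<forall>v\<in>S. cl i u v = cl' i u v" "rng K S c"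
  shows "okc cl S c = okc cl' S c"
proof -
  have eq: "\<And>u v. u \<in> S \<Longrightarrow> v \<in> S \<Longrightarrow> cl (c u) u v = cl' (c u) u v"
    using assms unfolding rng_def by blast
  show ?thesis using eq unfolding okc_def by blast
qed

lemma exists_pc:
  assumes "wfe vs es" "distinct vs" "set ks = {1..k}"
    and cl: "\<forall>i\<in>{1..k}. \<forall>u\<in>set vs. \<forall>v\<in>set vs. cl i u v = bcl es i u v"
  shows "(\<exists>c. packing_coloring (gr vs es) k c) \<longleftrightarrow> bt cl ks vs [] (\<lambda>_. 0) ks"
proof -
  have "(\<exists>c. packing_coloring (gr vs es) k c) \<longleftrightarrow> (\<exists>c. rng {1..k} (set vs) c \<and> okc cl (set vs) c)"
  proof -
    have "\<And>c. packing_coloring (gr vs es) k c \<longleftrightarrow> rng {1..k} (set vs) c \<and> okc cl (set vs) c"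
      using pc_gr[OF assms(1)] okc_cong[OF cl] by blast
    then show ?thesis by simp
  qed
  also have "\<dots> \<longleftrightarrow> bt cl ks vs [] (\<lambda>_. 0) ks"
    using bt_iff[of vs "[]" cl "\<lambda>_. 0" ks] assms(2,3)
    by (simp add: okc_def rng_def)
  finally show ?thesis .
qed

definition tab :: "(nat \<times> nat) list \<Rightarrow> nat \<Rightarrow> nat list list list" where
  "tab es n = map (\<lambda>u. map (\<lambda>i. ball es i u) [0..<5]) [0..<n]"

definition clt :: "(nat \<times> nat) list \<Rightarrow> nat \<Rightarrow> clf" where
  "clt es n = (\<lambda>i u v. v \<in> set (tab es n ! u ! i))"

lemma clt_ok: "u < n \<Longrightarrow> i < 5 \<Longrightarrow> clt es n i u v = bcl es i u v"
  unfolding clt_def tab_def bcl_def by simp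

lemma pc_mono: "packing_coloring G k c \<Longrightarrow> k \<le> k' \<Longrightarrow> packing_coloring G k' c"
  unfolding packing_coloring_def by auto

lemma mk_gr: "mk_graph n es = gr [0..<n] es"
  by (simp add: mk_graph_def gr_def)

lemma del_gr: "delete_vertex (gr vs es) x = gr (removeAll x vs) (filter (\<lambda>p. fst p \<noteq> x \<and> snd p \<noteq> x) es)"
  unfolding delete_vertex_def gr_def verts_def edges_def by auto

fun dels :: "(nat \<times> nat) list \<Rightarrow> nat \<Rightarrow> nat list \<Rightarrow> bool" where
  "dels es n [] = True"
| "dels es n (x # xs) = (bt (clt (filter (\<lambda>p. fst p \<noteq> x \<and> snd p \<noteq> x) es) n) [1,2,3] (removeAll x [0..<n]) [] (\<lambda>_. 0) [1,2,3] \<and> dels es n xs)"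

lemma dels_iff: "dels es n xs \<longleftrightarrow> list_all (\<lambda>x. bt (clt (filter (\<lambda>p. fst p \<noteq> x \<and> snd p \<noteq> x) es) n) [1,2,3] (removeAll x [0..<n]) [] (\<lambda>_. 0) [1,2,3]) xs"
  by (induction xs) auto

lemma crit:
  assumes wf: "wfe [0..<n] es"
    and n3: "\<not> bt (clt es n) [1,2,3] [0..<n] [] (\<lambda>_. 0) [1,2,3]"
    and y4: "bt (clt es n) [1,2,3,4] [0..<n] [] (\<lambda>_. 0) [1,2,3,4]"
    and dl0: "dels es n [0..<n]"
  shows "vertex_critical4 (mk_graph n es)"
proof -
  note dl = dl0[unfolded dels_iff]
  have d: "distinct [0..<n]" by simp
  have s3: "set [1,2,3] = {1..3::nat}" by auto
  have s4: "set [1,2,3,4] = {1..4::nat}" by auto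
  have c4: "\<forall>i\<in>{1..4}. \<forall>u\<in>set [0..<n]. \<forall>v\<in>set [0..<n]. clt es n i u v = bcl es i u v"
  proof (intro ballI)
    fix i u v assume "i \<in> {1..4::nat}" "u \<in> set [0..<n]"
    then show "clt es n i u v = bcl es i u v" by (intro clt_ok) auto
  qed
  have c3: "\<forall>i\<in>{1..3}. \<forall>u\<in>set [0..<n]. \<forall>v\<in>set [0..<n]. clt es n i u v = bcl es i u v"
  proof (intro ballI)
    fix i u v assume "i \<in> {1..3::nat}" "u \<in> set [0..<n]"
    then show "clt es n i u v = bcl es i u v" by (intro clt_ok) auto
  qed
  have a4: "\<exists>c. packing_coloring (gr [0..<n] es) 4 c" using exists_pc[OF wf d s4 c4] y4 by simp
  have n3': "\<not> (\<exists>c. packing_coloring (gr [0..<n] es) 3 c)" using exists_pc[OF wf d s3 c3] n3 by simp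
  have "packing_chromatic (gr [0..<n] es) = 4"
    unfolding packing_chromatic_def
  proof (rule Least_equality)
    show "\<exists>c. packing_coloring (gr [0..<n] es) 4 c" by (rule a4)
    fix y assume "\<exists>c. packing_coloring (gr [0..<n] es) y c"
    then obtain c where c: "packing_coloring (gr [0..<n] es) y c" by blast
    show "4 \<le> y"
    proof (rule ccontr)
      assume "\<not> 4 \<le> y"
      then have "y \<le> 3" by simp
      then have "packing_coloring (gr [0..<n] es) 3 c" using c pc_mono by blast
      then show False using n3' by blast
    qed
  qed
  moreover have "\<forall>x\<in>verts (gr [0..<n] es). packing_chromatic (delete_vertex (gr [0..<n] es) x) < 4"
  proof
    fix x assume x: "x \<in> verts (gr [0..<n] es)"
    let ?es = "filter (\<lambda>p. fst p \<noteq> x \<and> snd p \<noteq> x) es"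
    have wf2: "wfe (removeAll x [0..<n]) ?es" using wf unfolding wfe_def by auto
    have d2: "distinct (removeAll x [0..<n])" by (simp add: distinct_removeAll)
    have c3d: "\<forall>i\<in>{1..3}. \<forall>u\<in>set (removeAll x [0..<n]). \<forall>v\<in>set (removeAll x [0..<n]). clt ?es n i u v = bcl ?es i u v"
    proof (intro ballI)
      fix i u v assume "i \<in> {1..3::nat}" "u \<in> set (removeAll x [0..<n])"
      then show "clt ?es n i u v = bcl ?es i u v" by (intro clt_ok) auto
    qed
    have "bt (clt ?es n) [1,2,3] (removeAll x [0..<n]) [] (\<lambda>_. 0) [1,2,3]" using dl x by (simp add: list_all_iff)
    then have "\<exists>c. packing_coloring (delete_vertex (gr [0..<n] es) x) 3 c"
      using exists_pc[OF wf2 d2 s3 c3d] del_gr by simp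
    then have "packing_chromatic (delete_vertex (gr [0..<n] es) x) \<le> 3"
      unfolding packing_chromatic_def by (rule Least_le)
    then show "packing_chromatic (delete_vertex (gr [0..<n] es) x) < 4" by simp
  qed
  ultimately show ?thesis unfolding vertex_critical4_def mk_gr by simp
qed

lemma K4: "vertex_critical4 K4"
  unfolding K4_def by (rule crit; code_simp)

lemma H1: "vertex_critical4 H1"
  unfolding H1_def by (rule crit; code_simp)

lemma H2: "vertex_critical4 H2"
  unfolding H2_def by (rule crit; code_simp)

lemma H3: "vertex_critical4 H3"
  unfolding H3_def by (rule crit; code_simp)

lemma H4: "vertex_critical4 H4"
  unfolding H4_def by (rule crit; code_simp)

lemma H5: "vertex_critical4 H5"
  unfolding H5_def by (rule crit; code_simp)

lemma H6: "vertex_critical4 H6"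
  unfolding H6_def by (rule crit; code_simp)

lemma H7: "vertex_critical4 H7"
  unfolding H7_def by (rule crit; code_simp)

lemma H8: "vertex_critical4 H8"
  unfolding H8_def by (rule crit; code_simp)

lemma H9: "vertex_critical4 H9"
  unfolding H9_def by (rule crit; code_simp)

theorem mainTheorem3:
  shows "vertex_critical4 K4 \<and> vertex_critical4 H1 \<and> vertex_critical4 H2 \<and>
         vertex_critical4 H3 \<and> vertex_critical4 H4 \<and> vertex_critical4 H5 \<and>
         vertex_critical4 H6 \<and> vertex_critical4 H7 \<and> vertex_critical4 H8 \<and>
         vertex_critical4 H9"
  using K4 H1 H2 H3 H4 H5 H6 H7 H8 H9 by blast

end
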